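(* Let $n\ge 2$ and let $G=(V,A,s,t)$ be a doubly-rooted digraph with $|V|=n$, edges enumerated $A=\{a_1,\dots,a_{4n-1}\}$, and $B\subseteq A$ with $|B|\le 3$. Let $A^*=A\cup\{a_0,a_{4n}\}$, where $a_0$ is a new edge with $a_0^+=s$ and $a_{4n}$ is a new edge with $a_{4n}^-=t$ (their other endpoints being a new vertex $r$). For any $a\in A$ that is not a loop, \[S(G,B)=\sum_{c\in A^*:\,c^+=a^-}S(G_{a,c},B_{a,c})-\sum_{d\in A^*:\,d^-=a^+}S(G^{a,d},B^{a,d}),\] where all digraphs are given the enumerations described below.
   Context: For a doubly-rooted digraph $H$ with edges indexed by $\{1,\dots,k\}$ and $B'\subseteq A(H)$: $M(B')$ is the set of indices of edges in $B'$; $P(H)$ is the set of $\sigma\in\mathfrak{S}_k$ such that $(e_{\sigma(1)},\dots,e_{\sigma(k)})$ (with $e_j$ the edge of index $j$) is a directed Eulerian trail from the first root to the second root; for $M=\{j_1<\dots<j_\ell\}$, $\sigma_M\in\mathfrak{S}_\ell$ is $\sigma_M(g)=|\{h:\sigma(j_h)\le\sigma(j_g)\}|$; $S(H,B')=\sum_{\sigma\in P(H)}\mathrm{sgn}(\sigma)\mathrm{sgn}(\sigma_{M(B')})$. Edge $a$ has source $a^-$, target $a^+$; loops and multiple edges allowed. Constructions. For $c\in A$ with $c^+=a^-$: $G_{a,c}$ has vertex set $V$, roots $(s,t)$, and edge set obtained from $A$ by replacing $a$ with a loop $\overline{a}$ at $a^+$ (given the index of $a$) and $c$ with an edge $c_a$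 from $c^-$ to $a^+$ (given the index of $c$). For $d\in A$ with $d^-=a^+$: $G^{a,d}$ has vertex set $V$, roots $(s,t)$, and edge set obtained from $A$ by replacing $a$ with a loop $\overline{a}$ at $a^+$ (index of $a$) and $d$ with an edge $d^a$ from $a^-$ to $d^+$ (index of $d$). If $c=a_0$ (possible only when $s=a^-$), $G_{a,a_0}$ has vertex set $V$, edge set $(A\setminus\{a\})\cup\{\overline{a}\}$ ($\overline{a}$ a loop at $a^+$ with the index of $a$) and roots $(a^+,t)$. If $d=a_{4n}$ (possible only when $t=a^+$), $G^{a,a_{4n}}$ has vertex set $V$, edge set $(A\setminus\{a\})\cup\{\overline{a}\}$ and roots $(s,a^-)$. In all cases $B_{a,c}$ (resp. $B^{a,d}$) is obtained from $B$ by replacing $a$ by $\overline{a}$ and $c$ by $c_a$ (resp. $d$ by $d^a$) whenever these lie in $B$; thus the index sets of the distinguished edges are unchanged. *)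

theory Defs
  imports "HOL-Combinatorics.Permutations"
begin

text \<open>A doubly-rooted digraph with edges indexed by 1..k is encoded as a tuple
  (src, tgt, s, t): edge of index j goes from src j to tgt j; roots s (first), t (second).
  Distinguished edge sets B' are encoded by their index sets M.\<close>

type_synonym 'v drd = "(nat \<Rightarrow> 'v) \<times> (nat \<Rightarrow> 'v) \<times> 'v \<times> 'v"

definition is_trail :: "nat \<Rightarrow> 'v drd \<Rightarrow> (nat \<Rightarrow> nat) \<Rightarrow> bool" where
  "is_trail k H \<sigma> = (case H of (src, tgt, s, t) \<Rightarrow>
     (if k = 0 then s = t
      else src (\<sigma> 1) = s \<and> tgt (\<sigma> k) = t \<and>
           (\<forall>i\<in>{1..<k}. tgt (\<sigma> i) = src (\<sigma> (Suc i)))))"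

definition Ptrails :: "nat \<Rightarrow> 'v drd \<Rightarrow> (nat \<Rightarrow> nat) set" where
  "Ptrails k H = {\<sigma>. \<sigma> permutes {1..k} \<and> is_trail k H \<sigma>}"

definition restr_perm :: "(nat \<Rightarrow> nat) \<Rightarrow> nat set \<Rightarrow> nat \<Rightarrow> nat" where
  "restr_perm \<sigma> M = (\<lambda>g. if g \<in> {1..card M} then
       card {h \<in> {1..card M}. \<sigma> (sorted_list_of_set M ! (h - 1)) \<le> \<sigma> (sorted_list_of_set M ! (g - 1))}
     else g)"

definition Ssum :: "nat \<Rightarrow> 'v drd \<Rightarrow> nat set \<Rightarrow> int" where
  "Ssum k H M = (\<Sum>\<sigma>\<in>Ptrails k H. sign \<sigma> * sign (restr_perm \<sigma> M))"

text \<open>G_{a,c}: a has index i; c = 0 encodes the new edge a_0.\<close>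
definition G_low :: "nat \<Rightarrow> 'v drd \<Rightarrow> nat \<Rightarrow> 'v drd" where
  "G_low i H c = (case H of (src, tgt, s, t) \<Rightarrow>
     (if c = 0 then (src(i := tgt i), tgt, tgt i, t)
      else (src(i := tgt i), tgt(c := tgt i), s, t)))"

text \<open>G^{a,d}: a has index i; d = k+1 encodes the new edge a_{4n}.\<close>
definition G_up :: "nat \<Rightarrow> nat \<Rightarrow> 'v drd \<Rightarrow> nat \<Rightarrow> 'v drd" where
  "G_up k i H d = (case H of (src, tgt, s, t) \<Rightarrow>
     (if d = k + 1 then (src(i := tgt i), tgt, s, src i)
      else (src(i := tgt i, d := src i), tgt, s, t)))"

end

theory Submission
  imports Defs
begin

lemma pos_c:
  assumes "1 \<le> p" "p \<le> k" "tt p = w" "ss p = u" "u \<noteq> w" "q \<le> k" "q \<noteq> p - 1"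
  shows "(tt q = u \<and> (\<forall>j\<le>k. (if j = q then w else tt j) = (if Suc j = p then w else ss (Suc j)))) =
         (ss (Suc q) = w \<and> (\<forall>j\<le>k. tt j = (if j = q then u else if Suc j = p then w else ss (Suc j))))"
proof
  assume H: "tt q = u \<and> (\<forall>j\<le>k. (if j = q then w else tt j) = (if Suc j = p then w else ss (Suc j)))"
  have q1: "Suc q \<noteq> p" using assms by auto
  have "ss (Suc q) = w" using H q1 assms(6) by (metis)
  moreover have "\<forall>j\<le>k. tt j = (if j = q then u else if Suc j = p then w else ss (Suc j))"
  proof (intro allI impI)
    fix j assume "j \<le> k"
    then show "tt j = (if j = q then u else if Suc j = p then w else ss (Suc j))"
      using H by (cases "j = q") auto
  qed
  ultimately show "ss (Suc q) = w \<and> (\<forall>j\<le>k. tt j = (if j = q then u else if Suc j = p then w else ss (Suc j)))" by blast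
next
  assume H: "ss (Suc q) = w \<and> (\<forall>j\<le>k. tt j = (if j = q then u else if Suc j = p then w else ss (Suc j)))"
  have q1: "Suc q \<noteq> p" using assms by auto
  have "tt q = u" using H assms(6) by auto
  moreover have "\<forall>j\<le>k. (if j = q then w else tt j) = (if Suc j = p then w else ss (Suc j))"
  proof (intro allI impI)
    fix j assume "j \<le> k"
    then show "(if j = q then w else tt j) = (if Suc j = p then w else ss (Suc j))"
      using H q1 by (cases "j = q") auto
  qed
  ultimately show "tt q = u \<and> (\<forall>j\<le>k. (if j = q then w else tt j) = (if Suc j = p then w else ss (Suc j)))" by blast
qed

lemma pos_0:
  assumes "1 \<le> p" "p \<le> k" "tt p = w" "ss p = u" "u \<noteq> w" "q = p - 1"
  shows "(tt q = u \<and> (\<forall>j\<le>k. (if j = q then w else tt j) = (if Suc j = p then w else ss (Suc j)))) =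
         (\<forall>j\<le>k. tt j = ss (Suc j))"
proof
  assume H: "tt q = u \<and> (\<forall>j\<le>k. (if j = q then w else tt j) = (if Suc j = p then w else ss (Suc j)))"
  show "\<forall>j\<le>k. tt j = ss (Suc j)"
  proof (intro allI impI)
    fix j assume "j \<le> k"
    then show "tt j = ss (Suc j)"
      using H assms by (cases "j = q") auto
  qed
next
  assume H: "\<forall>j\<le>k. tt j = ss (Suc j)"
  have sq: "Suc q = p" using assms by auto
  have "tt q = u" using H assms sq by (metis diff_le_self le_trans)
  moreover have "\<forall>j\<le>k. (if j = q then w else tt j) = (if Suc j = p then w else ss (Suc j))"
  proof (intro allI impI)
    fix j assume "j \<le> k"
    then show "(if j = q then w else tt j) = (if Suc j = p then w else ss (Suc j))"
      using H sq by (cases "j = q") auto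
  qed
  ultimately show "tt q = u \<and> (\<forall>j\<le>k. (if j = q then w else tt j) = (if Suc j = p then w else ss (Suc j)))" by blast
qed

lemma sum_filter_bool:
  assumes "finite A"
  shows "(\<Sum>c\<in>{c\<in>A. P c}. of_bool (Q c) :: int) = (\<Sum>c\<in>A. of_bool (P c \<and> Q c))"
  unfolding sum.inter_filter[OF assms] by (rule sum.cong) auto

lemma count_lemma:
  fixes E :: "nat \<Rightarrow> nat" and T S :: "nat \<Rightarrow> 'v"
  assumes bijE: "bij_betw E {0..k} {0..k}"
    and bijE1: "bij_betw (\<lambda>q. E (Suc q)) {0..k} {1..k+1}"
    and injE: "inj_on E {0..k+1}"
    and p: "1 \<le> p" "p \<le> k" "E p = i" and Ti: "T i = w" and Si: "S i = u" and uw: "u \<noteq> w"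
  shows "(\<Sum>c\<in>{c\<in>{0..k}. T c = u}. of_bool (\<forall>j\<le>k. (T(c:=w)) (E j) = (S(i:=w)) (E (Suc j))) :: int)
    = of_bool (\<forall>j\<le>k. T (E j) = S (E (Suc j)))
      + (\<Sum>d\<in>{d\<in>{1..k+1}. S d = w}. of_bool (\<forall>j\<le>k. T (E j) = (S(i:=w, d:=u)) (E (Suc j))))"
proof -
  define tt where "tt j = T (E j)" for j
  define ss where "ss j = S (E j)" for j
  define cq where "cq q = (tt q = u \<and> (\<forall>j\<le>k. (if j = q then w else tt j) = (if Suc j = p then w else ss (Suc j))))" for q
  define dq where "dq q = (ss (Suc q) = w \<and> (\<forall>j\<le>k. tt j = (if j = q then u else if Suc j = p then w else ss (Suc j))))" for q
  have ttp: "tt p = w" using p Ti tt_def by simp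
  have ssp: "ss p = u" using p Si ss_def by simp
  have injeq: "E a = E b \<longleftrightarrow> a = b" if "a \<le> k+1" "b \<le> k+1" for a b
    using injE that unfolding inj_on_def by auto
  have L: "(\<Sum>c\<in>{c\<in>{0..k}. T c = u}. of_bool (\<forall>j\<le>k. (T(c:=w)) (E j) = (S(i:=w)) (E (Suc j))) :: int)
     = (\<Sum>c\<in>{0..k}. of_bool (T c = u \<and> (\<forall>j\<le>k. (T(c:=w)) (E j) = (S(i:=w)) (E (Suc j)))))"
    by (rule sum_filter_bool) simp
  also have "\<dots> = (\<Sum>q\<in>{0..k}. of_bool (T (E q) = u \<and> (\<forall>j\<le>k. (T(E q:=w)) (E j) = (S(i:=w)) (E (Suc j)))))"
    using sum.reindex_bij_betw[OF bijE, symmetric] by (rule trans[rotated]) simp_all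
  also have "\<dots> = (\<Sum>q\<in>{0..k}. of_bool (cq q))"
  proof (rule sum.cong[OF refl])
    fix q assume q: "q \<in> {0..k}"
    have "(T(E q:=w)) (E j) = (if j = q then w else tt j)" if "j \<le> k" for j
      using injeq[of j q] that q tt_def by auto
    moreover have "(S(i:=w)) (E (Suc j)) = (if Suc j = p then w else ss (Suc j))" if "j \<le> k" for j
      using injeq[of "Suc j" p] that p ss_def by auto
    ultimately show "of_bool (T (E q) = u \<and> (\<forall>j\<le>k. (T(E q:=w)) (E j) = (S(i:=w)) (E (Suc j)))) = (of_bool (cq q) :: int)"
      unfolding cq_def tt_def by simp
  qed
  finally have L2: "(\<Sum>c\<in>{c\<in>{0..k}. T c = u}. of_bool (\<forall>j\<le>k. (T(c:=w)) (E j) = (S(i:=w)) (E (Suc j))) :: int)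
     = (\<Sum>q\<in>{0..k}. of_bool (cq q))" .
  have "(\<Sum>d\<in>{d\<in>{1..k+1}. S d = w}. of_bool (\<forall>j\<le>k. T (E j) = (S(i:=w, d:=u)) (E (Suc j))) :: int)
     = (\<Sum>d\<in>{1..k+1}. of_bool (S d = w \<and> (\<forall>j\<le>k. T (E j) = (S(i:=w, d:=u)) (E (Suc j)))))"
    by (rule sum_filter_bool) simp
  also have "\<dots> = (\<Sum>q\<in>{0..k}. of_bool (S (E (Suc q)) = w \<and> (\<forall>j\<le>k. T (E j) = (S(i:=w, E (Suc q):=u)) (E (Suc j)))))"
    using sum.reindex_bij_betw[OF bijE1, symmetric] by (rule trans[rotated]) simp_all
  also have "\<dots> = (\<Sum>q\<in>{0..k}. of_bool (dq q))"
  proof (rule sum.cong[OF refl])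
    fix q assume q: "q \<in> {0..k}"
    have "(S(i:=w, E (Suc q):=u)) (E (Suc j)) = (if j = q then u else if Suc j = p then w else ss (Suc j))" if "j \<le> k" for j
      using injeq[of "Suc j" p] injeq[of "Suc j" "Suc q"] that p q ss_def by auto
    then show "of_bool (S (E (Suc q)) = w \<and> (\<forall>j\<le>k. T (E j) = (S(i:=w, E (Suc q):=u)) (E (Suc j)))) = (of_bool (dq q) :: int)"
      unfolding dq_def tt_def ss_def by simp
  qed
  finally have R2: "(\<Sum>d\<in>{d\<in>{1..k+1}. S d = w}. of_bool (\<forall>j\<le>k. T (E j) = (S(i:=w, d:=u)) (E (Suc j))) :: int)
     = (\<Sum>q\<in>{0..k}. of_bool (dq q))" .
  have pm: "p - 1 \<in> {0..k}" using p by auto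
  have "(\<Sum>q\<in>{0..k}. of_bool (cq q) :: int) = of_bool (cq (p-1)) + (\<Sum>q\<in>{0..k} - {p-1}. of_bool (cq q))"
    by (rule sum.remove) (use pm in auto)
  also have "cq (p-1) = (\<forall>j\<le>k. tt j = ss (Suc j))"
    unfolding cq_def using pos_0[where tt=tt and ss=ss and k=k and p=p and w=w and u=u and q="p-1", OF p(1,2) ttp ssp uw refl] .
  also have "(\<Sum>q\<in>{0..k} - {p-1}. of_bool (cq q) :: int) = (\<Sum>q\<in>{0..k} - {p-1}. of_bool (dq q))"
    by (rule sum.cong[OF refl]) (use pos_c[where tt=tt and ss=ss and k=k and p=p and w=w and u=u, OF p(1,2) ttp ssp uw] in \<open>auto simp: cq_def dq_def\<close>)
  also have "\<dots> = (\<Sum>q\<in>{0..k}. of_bool (dq q))"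
  proof -
    have "\<not> dq (p-1)" using p ssp uw unfolding dq_def by auto
    moreover have "(\<Sum>q\<in>{0..k}. of_bool (dq q) :: int) = of_bool (dq (p-1)) + (\<Sum>q\<in>{0..k} - {p-1}. of_bool (dq q))"
      by (rule sum.remove) (use pm in auto)
    ultimately show ?thesis by simp
  qed
  finally show ?thesis using L2 R2 unfolding tt_def ss_def by simp
qed

definition ext_seq :: "nat \<Rightarrow> (nat \<Rightarrow> nat) \<Rightarrow> nat \<Rightarrow> nat" where
  "ext_seq k \<sigma> j = (if j = 0 then 0 else if j = k + 1 then k + 1 else \<sigma> j)"

lemma trail_char:
  assumes perm: "\<sigma> permutes {1..k}" and k: "1 \<le> k"
  shows "is_trail k (src', tgt', s', t') \<sigma> \<longleftrightarrow>
    (\<forall>j\<le>k. (\<lambda>c. if c = 0 then s' else tgt' c) (ext_seq k \<sigma> j) =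
            (\<lambda>d. if d = k + 1 then t' else src' d) (ext_seq k \<sigma> (Suc j)))"
proof -
  have rng: "\<sigma> j \<in> {1..k}" if "j \<in> {1..k}" for j
    using permutes_in_image[OF perm] that by blast
  show ?thesis
  proof
    assume H: "is_trail k (src', tgt', s', t') \<sigma>"
    show "\<forall>j\<le>k. (\<lambda>c. if c = 0 then s' else tgt' c) (ext_seq k \<sigma> j) =
            (\<lambda>d. if d = k + 1 then t' else src' d) (ext_seq k \<sigma> (Suc j))"
    proof (intro allI impI)
      fix j assume j: "j \<le> k"
      consider "j = 0" | "j = k" | "1 \<le> j" "j < k" using j by linarith
      then show "(\<lambda>c. if c = 0 then s' else tgt' c) (ext_seq k \<sigma> j) =
            (\<lambda>d. if d = k + 1 then t' else src' d) (ext_seq k \<sigma> (Suc j))"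
      proof cases
        case 1
        then show ?thesis using H k rng[of 1] by (auto simp: is_trail_def ext_seq_def)
      next
        case 2
        then show ?thesis using H k rng[of k] by (auto simp: is_trail_def ext_seq_def)
      next
        case 3
        then show ?thesis using H k rng[of j] rng[of "Suc j"] by (auto simp: is_trail_def ext_seq_def)
      qed
    qed
  next
    assume H: "\<forall>j\<le>k. (\<lambda>c. if c = 0 then s' else tgt' c) (ext_seq k \<sigma> j) =
            (\<lambda>d. if d = k + 1 then t' else src' d) (ext_seq k \<sigma> (Suc j))"
    have a: "src' (\<sigma> 1) = s'" using H[rule_format, of 0] k rng[of 1] by (auto simp: ext_seq_def)
    have b: "tgt' (\<sigma> k) = t'" using H[rule_format, of k] k rng[of k] by (auto simp: ext_seq_def)
    have c: "tgt' (\<sigma> j) = src' (\<sigma> (Suc j))" if "j \<in> {1..<k}" for j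
      using H[rule_format, of j] that rng[of j] rng[of "Suc j"] by (auto simp: ext_seq_def)
    show "is_trail k (src', tgt', s', t') \<sigma>" using a b c k by (auto simp: is_trail_def)
  qed
qed

lemma ext_seq_facts:
  assumes perm: "\<sigma> permutes {1..k}"
  shows "bij_betw (ext_seq k \<sigma>) {0..k} {0..k}"
    and "bij_betw (\<lambda>q. ext_seq k \<sigma> (Suc q)) {0..k} {1..k+1}"
    and "inj_on (ext_seq k \<sigma>) {0..k+1}"
proof -
  have rng: "\<sigma> j \<in> {1..k}" if "j \<in> {1..k}" for j
    using permutes_in_image[OF perm] that by blast
  have injs: "inj_on \<sigma> {1..k}" using perm permutes_inj_on by blast
  have ims: "\<sigma> ` {1..k} = {1..k}" using permutes_image[OF perm] .
  show inj: "inj_on (ext_seq k \<sigma>) {0..k+1}"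
  proof (rule inj_onI)
    fix a b assume a: "a \<in> {0..k+1}" and b: "b \<in> {0..k+1}" and e: "ext_seq k \<sigma> a = ext_seq k \<sigma> b"
    show "a = b"
    proof (cases "a \<in> {1..k} \<and> b \<in> {1..k}")
      case True
      then have "ext_seq k \<sigma> a = \<sigma> a" "ext_seq k \<sigma> b = \<sigma> b" by (auto simp: ext_seq_def)
      then show ?thesis using e True inj_onD[OF injs] by metis
    next
      case False
      have ea: "a \<in> {1..k} \<Longrightarrow> ext_seq k \<sigma> a \<in> {1..k}" using rng[of a] by (simp add: ext_seq_def)
      have eb: "b \<in> {1..k} \<Longrightarrow> ext_seq k \<sigma> b \<in> {1..k}" using rng[of b] by (simp add: ext_seq_def)
      have "a = 0 \<or> a = k+1 \<or> a \<in> {1..k}" "b = 0 \<or> b = k+1 \<or> b \<in> {1..k}" using a b by auto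
      have z: "ext_seq k \<sigma> 0 = 0" "ext_seq k \<sigma> (k+1) = k+1" by (auto simp: ext_seq_def)
      show ?thesis
      proof (cases "a = 0")
        case True
        then show ?thesis using \<open>b = 0 \<or> b = k+1 \<or> b \<in> {1..k}\<close> e z eb by auto
      next
        case a0: False
        show ?thesis
        proof (cases "a = k+1")
          case True
          then show ?thesis using a0 \<open>b = 0 \<or> b = k+1 \<or> b \<in> {1..k}\<close> e z eb by auto
        next
          case False
          then have "a \<in> {1..k}" using a0 \<open>a = 0 \<or> a = k+1 \<or> a \<in> {1..k}\<close> by blast
          then show ?thesis using \<open>b = 0 \<or> b = k+1 \<or> b \<in> {1..k}\<close> e z ea \<open>\<not> (a \<in> {1..k} \<and> b \<in> {1..k})\<close> by auto
        qed
      qed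
    qed
  qed
  have im0: "ext_seq k \<sigma> ` {0..k} = {0..k}"
  proof -
    have f1: "{0..k} = insert 0 {1..k}" by auto
    have f2: "ext_seq k \<sigma> ` {1..k} = \<sigma> ` {1..k}"
      by (rule image_cong) (auto simp: ext_seq_def)
    have f3: "ext_seq k \<sigma> 0 = 0" by (simp add: ext_seq_def)
    show ?thesis unfolding f1 image_insert f2 f3 ims ..
  qed
  have im1: "(\<lambda>q. ext_seq k \<sigma> (Suc q)) ` {0..k} = {1..k+1}"
  proof -
    have e1: "(\<lambda>q. ext_seq k \<sigma> (Suc q)) ` {0..k} = ext_seq k \<sigma> ` (Suc ` {0..k})"
      by (simp only: image_image)
    have e2: "Suc ` {0..k} = insert (k+1) {1..k}"
      by (auto simp: image_Suc_atLeastAtMost)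
    have e3: "ext_seq k \<sigma> ` {1..k} = \<sigma> ` {1..k}"
      by (rule image_cong) (auto simp: ext_seq_def)
    have e4: "ext_seq k \<sigma> (k+1) = k+1" by (simp add: ext_seq_def)
    have e5: "insert (k+1) {1..k} = {1..k+1}" by auto
    show ?thesis unfolding e1 e2 image_insert e3 e4 ims by (rule e5)
  qed
  show "bij_betw (ext_seq k \<sigma>) {0..k} {0..k}"
    unfolding bij_betw_def using im0 inj_on_subset[OF inj] by auto
  show "bij_betw (\<lambda>q. ext_seq k \<sigma> (Suc q)) {0..k} {1..k+1}"
  proof -
    have "inj_on (\<lambda>q. ext_seq k \<sigma> (Suc q)) {0..k}"
    proof (rule inj_onI)
      fix x y assume "x \<in> {0..k}" "y \<in> {0..k}" "ext_seq k \<sigma> (Suc x) = ext_seq k \<sigma> (Suc y)"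
      then have "Suc x = Suc y" using inj_onD[OF inj, of "Suc x" "Suc y"] by auto
      then show "x = y" by simp
    qed
    then show ?thesis unfolding bij_betw_def using im1 by auto
  qed
qed

lemma trail_char':
  assumes perm: "\<sigma> permutes {1..k}" and k: "1 \<le> k"
    and "T' = (\<lambda>c. if c = 0 then s' else tgt' c)" and "S' = (\<lambda>d. if d = k + 1 then t' else src' d)"
  shows "is_trail k (src', tgt', s', t') \<sigma> \<longleftrightarrow> (\<forall>j\<le>k. T' (ext_seq k \<sigma> j) = S' (ext_seq k \<sigma> (Suc j)))"
  unfolding assms(3,4) by (rule trail_char[OF perm k])

lemma low_char:
  assumes perm: "\<sigma> permutes {1..k}" and k: "1 \<le> k" and i: "i \<in> {1..k}" and c: "c \<le> k"
  shows "is_trail k (G_low i (src, tgt, s, t) c) \<sigma> \<longleftrightarrow>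
    (\<forall>j\<le>k. ((\<lambda>c. if c = 0 then s else tgt c)(c := tgt i)) (ext_seq k \<sigma> j) =
            ((\<lambda>d. if d = k + 1 then t else src d)(i := tgt i)) (ext_seq k \<sigma> (Suc j)))"
proof -
  have eqS: "(\<lambda>d. if d = k + 1 then t else (src(i := tgt i)) d) = (\<lambda>d. if d = k + 1 then t else src d)(i := tgt i)"
    using i by (intro ext) auto
  show ?thesis
  proof (cases "c = 0")
    case True
    have eqT: "(\<lambda>c'. if c' = 0 then tgt i else tgt c') = (\<lambda>c'. if c' = 0 then s else tgt c')(c := tgt i)"
      using True by (intro ext) auto
    have GL: "G_low i (src, tgt, s, t) c = (src(i := tgt i), tgt, tgt i, t)" using True by (simp add: G_low_def)
    show ?thesis unfolding GL by (rule trail_char'[OF perm k eqT[symmetric] eqS[symmetric]])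
  next
    case False
    have eqT: "(\<lambda>c'. if c' = 0 then s else (tgt(c := tgt i)) c') = (\<lambda>c'. if c' = 0 then s else tgt c')(c := tgt i)"
      using False by (intro ext) auto
    have GL: "G_low i (src, tgt, s, t) c = (src(i := tgt i), tgt(c := tgt i), s, t)" using False by (simp add: G_low_def)
    show ?thesis unfolding GL by (rule trail_char'[OF perm k eqT[symmetric] eqS[symmetric]])
  qed
qed

lemma up_char:
  assumes perm: "\<sigma> permutes {1..k}" and k: "1 \<le> k" and i: "i \<in> {1..k}" and d: "d \<in> {1..k+1}"
  shows "is_trail k (G_up k i (src, tgt, s, t) d) \<sigma> \<longleftrightarrow>
    (\<forall>j\<le>k. (\<lambda>c. if c = 0 then s else tgt c) (ext_seq k \<sigma> j) =
            ((\<lambda>d. if d = k + 1 then t else src d)(i := tgt i, d := src i)) (ext_seq k \<sigma> (Suc j)))"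
proof (cases "d = k + 1")
  case True
  have eqS: "(\<lambda>d'. if d' = k + 1 then src i else (src(i := tgt i)) d') = (\<lambda>d'. if d' = k + 1 then t else src d')(i := tgt i, d := src i)"
    using i True by (intro ext) auto
  have GL: "G_up k i (src, tgt, s, t) d = (src(i := tgt i), tgt, s, src i)" using True by (simp add: G_up_def)
  show ?thesis unfolding GL by (rule trail_char'[OF perm k refl eqS[symmetric]])
next
  case False
  have eqS: "(\<lambda>d'. if d' = k + 1 then t else (src(i := tgt i, d := src i)) d') = (\<lambda>d'. if d' = k + 1 then t else src d')(i := tgt i, d := src i)"
    using i False by (intro ext) auto
  have GL: "G_up k i (src, tgt, s, t) d = (src(i := tgt i, d := src i), tgt, s, t)" using False by (simp add: G_up_def)
  show ?thesis unfolding GL by (rule trail_char'[OF perm k refl eqS[symmetric]])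
qed

lemma pointwise:
  assumes perm: "\<sigma> permutes {1..k}" and k: "1 \<le> k" and i: "i \<in> {1..k}" and ne: "src i \<noteq> tgt i"
  shows "(of_bool (is_trail k (src, tgt, s, t) \<sigma>) :: int) =
     (\<Sum>c\<in>{c\<in>{0..k}. (if c = 0 then s else tgt c) = src i}. of_bool (is_trail k (G_low i (src, tgt, s, t) c) \<sigma>))
   - (\<Sum>d\<in>{d\<in>{1..k+1}. (if d = k + 1 then t else src d) = tgt i}. of_bool (is_trail k (G_up k i (src, tgt, s, t) d) \<sigma>))"
proof -
  define T where "T = (\<lambda>c. if c = 0 then s else tgt c)"
  define S where "S = (\<lambda>d. if d = k + 1 then t else src d)"
  define E where "E = ext_seq k \<sigma>"
  obtain p where p: "p \<in> {1..k}" "\<sigma> p = i"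
    using i permutes_image[OF perm] by (metis imageE)
  have Ep: "E p = i" using p by (auto simp: E_def ext_seq_def)
  have Ti: "T i = tgt i" using i by (auto simp: T_def)
  have Si: "S i = src i" using i by (auto simp: S_def)
  have CL: "(\<Sum>c\<in>{c\<in>{0..k}. T c = src i}. of_bool (\<forall>j\<le>k. (T(c:=tgt i)) (E j) = (S(i:=tgt i)) (E (Suc j))) :: int)
    = of_bool (\<forall>j\<le>k. T (E j) = S (E (Suc j)))
      + (\<Sum>d\<in>{d\<in>{1..k+1}. S d = tgt i}. of_bool (\<forall>j\<le>k. T (E j) = (S(i:=tgt i, d:=src i)) (E (Suc j))))"
    unfolding E_def
    by (rule count_lemma[where p=p and T=T and S=S and w="tgt i" and u="src i", OF ext_seq_facts[OF perm] _ _ _ Ti Si ne]) (use p in \<open>auto simp: ext_seq_def\<close>)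
  have a: "is_trail k (src, tgt, s, t) \<sigma> \<longleftrightarrow> (\<forall>j\<le>k. T (E j) = S (E (Suc j)))"
    unfolding T_def S_def E_def by (rule trail_char[OF perm k])
  have b: "(\<Sum>c\<in>{c\<in>{0..k}. (if c = 0 then s else tgt c) = src i}. of_bool (is_trail k (G_low i (src, tgt, s, t) c) \<sigma>) :: int)
     = (\<Sum>c\<in>{c\<in>{0..k}. T c = src i}. of_bool (\<forall>j\<le>k. (T(c:=tgt i)) (E j) = (S(i:=tgt i)) (E (Suc j))))"
    unfolding T_def S_def E_def
    by (rule sum.cong[OF refl]) (simp add: low_char[OF perm k i])
  have c: "(\<Sum>d\<in>{d\<in>{1..k+1}. (if d = k + 1 then t else src d) = tgt i}. of_bool (is_trail k (G_up k i (src, tgt, s, t) d) \<sigma>) :: int)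
     = (\<Sum>d\<in>{d\<in>{1..k+1}. S d = tgt i}. of_bool (\<forall>j\<le>k. T (E j) = (S(i:=tgt i, d:=src i)) (E (Suc j))))"
    unfolding T_def S_def E_def
    by (rule sum.cong[OF refl]) (simp add: up_char[OF perm k i])
  show ?thesis unfolding a b c CL by simp
qed

theorem lemma4p5:
  fixes n k :: nat and V :: "'v set" and src tgt :: "nat \<Rightarrow> 'v" and s t :: 'v
    and M :: "nat set" and i :: nat
  assumes "n \<ge> 2" and "finite V" and "card V = n"
    and "k = 4 * n - 1"
    and "s \<in> V" and "t \<in> V"
    and "\<forall>j\<in>{1..k}. src j \<in> V \<and> tgt j \<in> V"
    and "M \<subseteq> {1..k}" and "card M \<le> 3"
    and "i \<in> {1..k}" and "src i \<noteq> tgt i"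
  shows "Ssum k (src, tgt, s, t) M =
     (\<Sum>c\<in>{c\<in>{0..k}. (if c = 0 then s else tgt c) = src i}.
         Ssum k (G_low i (src, tgt, s, t) c) M)
   - (\<Sum>d\<in>{d\<in>{1..k+1}. (if d = k + 1 then t else src d) = tgt i}.
         Ssum k (G_up k i (src, tgt, s, t) d) M)"
proof -
  define Perm where "Perm = {\<sigma>. \<sigma> permutes {1..k}}"
  define wt where "wt \<sigma> = sign \<sigma> * sign (restr_perm \<sigma> M)" for \<sigma> :: "nat \<Rightarrow> nat"
  have fin: "finite Perm" unfolding Perm_def by (rule finite_permutations) simp
  have k: "1 \<le> k" using assms(1,4) by simp
  have alt: "Ssum k H M = (\<Sum>\<sigma>\<in>Perm. wt \<sigma> * of_bool (is_trail k H \<sigma>))" for H :: "'v drd"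
  proof -
    have "Ptrails k H = {\<sigma>\<in>Perm. is_trail k H \<sigma>}" unfolding Ptrails_def Perm_def by simp
    then have "Ssum k H M = (\<Sum>\<sigma>\<in>{\<sigma>\<in>Perm. is_trail k H \<sigma>}. wt \<sigma>)"
      unfolding Ssum_def wt_def by simp
    also have "\<dots> = (\<Sum>\<sigma>\<in>Perm. if is_trail k H \<sigma> then wt \<sigma> else 0)"
      by (rule sum.inter_filter[OF fin])
    also have "\<dots> = (\<Sum>\<sigma>\<in>Perm. wt \<sigma> * of_bool (is_trail k H \<sigma>))"
      by (rule sum.cong) auto
    finally show ?thesis .
  qed
  define C where "C = {c\<in>{0..k}. (if c = 0 then s else tgt c) = src i}"
  define D where "D = {d\<in>{1..k+1}. (if d = k + 1 then t else src d) = tgt i}"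
  have finC: "finite C" unfolding C_def by simp
  have finD: "finite D" unfolding D_def by simp
  have "(\<Sum>c\<in>C. Ssum k (G_low i (src, tgt, s, t) c) M) - (\<Sum>d\<in>D. Ssum k (G_up k i (src, tgt, s, t) d) M)
    = (\<Sum>c\<in>C. \<Sum>\<sigma>\<in>Perm. wt \<sigma> * of_bool (is_trail k (G_low i (src, tgt, s, t) c) \<sigma>))
      - (\<Sum>d\<in>D. \<Sum>\<sigma>\<in>Perm. wt \<sigma> * of_bool (is_trail k (G_up k i (src, tgt, s, t) d) \<sigma>))"
    by (simp add: alt)
  also have "\<dots> = (\<Sum>\<sigma>\<in>Perm. wt \<sigma> * (\<Sum>c\<in>C. of_bool (is_trail k (G_low i (src, tgt, s, t) c) \<sigma>)))
      - (\<Sum>\<sigma>\<in>Perm. wt \<sigma> * (\<Sum>d\<in>D. of_bool (is_trail k (G_up k i (src, tgt, s, t) d) \<sigma>)))"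
    by (simp add: sum_distrib_left sum.swap[of _ C] sum.swap[of _ D])
  also have "\<dots> = (\<Sum>\<sigma>\<in>Perm. wt \<sigma> * ((\<Sum>c\<in>C. of_bool (is_trail k (G_low i (src, tgt, s, t) c) \<sigma>))
      - (\<Sum>d\<in>D. of_bool (is_trail k (G_up k i (src, tgt, s, t) d) \<sigma>))))"
    by (simp add: sum_subtractf right_diff_distrib)
  also have "\<dots> = (\<Sum>\<sigma>\<in>Perm. wt \<sigma> * of_bool (is_trail k (src, tgt, s, t) \<sigma>))"
  proof (rule sum.cong[OF refl])
    fix \<sigma> assume "\<sigma> \<in> Perm"
    then have perm: "\<sigma> permutes {1..k}" unfolding Perm_def by simp
    show "wt \<sigma> * ((\<Sum>c\<in>C. of_bool (is_trail k (G_low i (src, tgt, s, t) c) \<sigma>))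
      - (\<Sum>d\<in>D. of_bool (is_trail k (G_up k i (src, tgt, s, t) d) \<sigma>))) = wt \<sigma> * of_bool (is_trail k (src, tgt, s, t) \<sigma>)"
      unfolding C_def D_def using pointwise[where src=src and tgt=tgt and s=s and t=t, OF perm k assms(10,11)] by simp
  qed
  also have "\<dots> = Ssum k (src, tgt, s, t) M" by (simp add: alt)
  finally show ?thesis unfolding C_def D_def by simp
qed

end
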